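(* Let $S(n)=(3n+1)/2^{v_2(3n+1)}$ be the odd-to-odd Syracuse map, let $m\ge 0$ be an integer, $q=8m+3$ and $n=64q+57=512m+249$. Then $S^4(n)=648m+317$, so $3S^4(n)+1=8(243m+119)$. Let $w=v_2(243m+119)$. Then $S^5(n)=(243m+119)/2^w$, and $S^5(n)\equiv 57\pmod{64}$ if and only if $243m+119\equiv 57\cdot 2^w\pmod{2^{w+6}}$. For each $w\ge 0$ there is a unique residue class $m\equiv a_w\pmod{2^{w+6}}$, namely $a_w=243^{-1}(57\cdot 2^w-119)\bmod 2^{w+6}$, on which this return occurs with $v_2(243m+119)=w$; these classes are pairwise disjoint and their union has natural density $\sum_{w\ge 0}2^{-(w+6)}=1/32$ in the set of nonnegative integers $m$. Within the class for a given $w$, writing $m=a_w+2^{w+6}t$ ($t\ge 0$), the destination quotient $q'=(S^5(n)-57)/64$ has the form $q'=k_0(w)+243t$ for an integer $k_0(w)$ depending only on $w$; hence $q'\bmod 64$ is exactly uniformly distributed as $t$ ranges over any $64$ consecutive integers.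
   Context: $v_2$ is the $2$-adic valuation; $243^{-1}$ denotes the inverse of $243$ modulo $2^{w+6}$. *)

theory Defs
  imports Complex_Main "HOL-Number_Theory.Number_Theory"
begin

definition v2 :: "nat \<Rightarrow> nat" where
  "v2 x = multiplicity (2::nat) x"

definition syr :: "nat \<Rightarrow> nat" where
  "syr n = (3*n+1) div 2 ^ v2 (3*n+1)"

definition inv_mod :: "int \<Rightarrow> int \<Rightarrow> int" where
  "inv_mod a M = (THE x. 0 \<le> x \<and> x < M \<and> [a * x = 1] (mod M))"

definition a_res :: "nat \<Rightarrow> int" where
  "a_res w = (inv_mod 243 (2^(w+6)) * (57 * 2^w - 119)) mod 2^(w+6)"

definition qdest :: "nat \<Rightarrow> int" where
  "qdest m = (int ((syr ^^ 5) (512*m+249)) - 57) div 64"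

end

theory Submission
  imports Defs
begin


lemma v2_pow_odd: "odd (u::nat) \<Longrightarrow> v2 (2^k * u) = k"
  unfolding v2_def by (rule multiplicity_decomposeI) auto

lemma v2_decomp:
  assumes "(x::nat) > 0"
  shows "x = 2^(v2 x) * (x div 2^(v2 x))" "odd (x div 2^(v2 x))"
  using multiplicity_dvd[of "2::nat" x] multiplicity_decompose[where p="2::nat" and x=x] assms unfolding v2_def by auto

lemma syr_step: "3*n+1 = 2^k * u \<Longrightarrow> odd u \<Longrightarrow> syr n = u"
  unfolding syr_def by (simp add: v2_pow_odd)

lemma syr4: "(syr ^^ 4) (512*m+249) = 648*m+317"
proof -
  have 1: "syr (512*m+249) = 384*m+187" by (rule syr_step[where k=2]) auto
  have 2: "syr (384*m+187) = 576*m+281" by (rule syr_step[where k=1]) auto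
  have 3: "syr (576*m+281) = 432*m+211" by (rule syr_step[where k=2]) auto
  have 4: "syr (432*m+211) = 648*m+317" by (rule syr_step[where k=1]) auto
  have e: "(4::nat) = Suc(Suc(Suc(Suc 0)))" by simp
  show ?thesis unfolding e by (simp add: 1 2 3 4)
qed

lemma syr5: "(syr ^^ 5) (512*m+249) = (243*m+119) div 2 ^ v2 (243*m+119)"
proof -
  let ?x = "243*m+119"
  have x0: "?x > 0" by simp
  have e: "(5::nat) = Suc 4" by simp
  have "(syr ^^ 5) (512*m+249) = syr ((syr ^^ 4) (512*m+249))"
    unfolding e funpow.simps(2) comp_def by (rule refl)
  also have "\<dots> = syr (648*m+317)" by (simp add: syr4)
  also have "\<dots> = ?x div 2 ^ v2 ?x"
    apply (rule syr_step[where k="3 + v2 ?x"])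
    using v2_decomp[OF x0] by (auto simp: power_add)
  finally show ?thesis .
qed


lemma v2_dvd: "(x::nat) > 0 \<Longrightarrow> 2^k dvd x \<longleftrightarrow> k \<le> v2 x"
  unfolding v2_def by (rule power_dvd_iff_le_multiplicity) auto

lemma mod_mult_pow: "((2::nat)^k * u) mod 2^(k+6) = 2^k * (u mod 64)"
proof -
  have "(2::nat)^(k+6) = 2^k * 64" by (simp add: power_add)
  then show ?thesis by (simp only: mod_mult_mult1)
qed

lemma cong_char:
  assumes x0: "(x::nat) > 0"
  shows "[x = 57*2^w] (mod 2^(w+6)) \<longleftrightarrow> v2 x = w \<and> (x div 2^w) mod 64 = 57"
proof -
  define v where "v = v2 x"
  define u where "u = x div 2^v"
  have xu: "x = 2^v * u" and ou: "odd u" using v2_decomp[OF x0] unfolding u_def v_def by auto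
  have m57: "(57 * 2^w) mod (2::nat)^(w+6) = 2^w * 57"
    using mod_mult_pow[of w 57] by (simp add: mult.commute)
  show ?thesis
  proof
    assume c: "[x = 57*2^w] (mod 2^(w+6))"
    have "v = w"
    proof (rule ccontr)
      assume "v \<noteq> w"
      then consider "v < w" | "w < v" by linarith
      then show False
      proof cases
        case 1
        have d: "(2::nat)^(v+1) dvd 2^(w+6)" by (rule le_imp_power_dvd) (use 1 in simp)
        have "(2::nat)^(v+1) dvd 2^w" by (rule le_imp_power_dvd) (use 1 in simp)
        then have "(2::nat)^(v+1) dvd 57*2^w" by simp
        then have "(2::nat)^(v+1) dvd x" using cong_dvd_iff[OF cong_dvd_modulus_nat[OF c d]] by simp
        then show False using v2_dvd[OF x0, of "v+1"] v_def by simp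
      next
        case 2
        have d: "(2::nat)^(w+1) dvd 2^(w+6)" by (rule le_imp_power_dvd) simp
        have "(2::nat)^(w+1) dvd x" using 2 v2_dvd[OF x0, of "w+1"] v_def by simp
        then have "(2::nat)^(w+1) dvd 57*2^w" using cong_dvd_iff[OF cong_dvd_modulus_nat[OF c d]] by simp
        then show False by simp
      qed
    qed
    moreover have "u mod 64 = 57"
    proof -
      have "x mod 2^(w+6) = 2^w * (u mod 64)" using xu `v = w` mod_mult_pow by simp
      moreover have "x mod 2^(w+6) = 2^w * 57" using c m57 unfolding cong_def by simp
      ultimately show ?thesis by simp
    qed
    ultimately show "v2 x = w \<and> (x div 2^w) mod 64 = 57" using u_def v_def by simp
  next
    assume "v2 x = w \<and> (x div 2^w) mod 64 = 57"
    then have "v = w" "u mod 64 = 57" using u_def v_def by auto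
    then have "x mod 2^(w+6) = 2^w * 57" using xu mod_mult_pow by simp
    then show "[x = 57*2^w] (mod 2^(w+6))" using m57 unfolding cong_def by simp
  qed
qed

lemma part1_iff:
  "(syr ^^ 5) (512*m+249) mod 64 = 57 \<longleftrightarrow>
         [243*m+119 = 57 * 2 ^ v2 (243*m+119)] (mod 2 ^ (v2 (243*m+119) + 6))"
  using cong_char[of "243*m+119" "v2 (243*m+119)"] syr5 by simp

lemma char_nat:
  "((syr ^^ 5) (512*m+249) mod 64 = 57 \<and> v2 (243*m+119) = w) \<longleftrightarrow>
         [243*m+119 = 57 * 2 ^ w] (mod 2 ^ (w + 6))"
  using cong_char[of "243*m+119" w] syr5 by auto

lemma inv_ex1: "\<exists>!x. 0 \<le> x \<and> x < (2::int)^k \<and> [243 * x = 1] (mod 2^k)"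
proof -
  have cp: "coprime (243::int) (2^k)" by simp
  obtain x where x: "0 \<le> x \<and> x < (2::int)^k \<and> [243 * x = 1] (mod 2^k)"
    using coprime_iff_invertible'_int[of "2^k" 243] cp by auto
  show ?thesis
  proof (rule ex1I[of _ x])
    show "0 \<le> x \<and> x < (2::int)^k \<and> [243 * x = 1] (mod 2^k)" by (rule x)
    fix y assume y: "0 \<le> y \<and> y < (2::int)^k \<and> [243 * y = 1] (mod 2^k)"
    have "[243 * y = 243 * x] (mod 2^k)" using x y by (meson cong_sym cong_trans)
    then have "[y = x] (mod 2^k)" using cp cong_mult_lcancel by blast
    then show "y = x" using x y by (simp add: cong_def)
  qed
qed

lemma inv243: "0 \<le> inv_mod 243 (2^k) \<and> inv_mod 243 (2^k) < 2^k \<and> [243 * inv_mod 243 (2^k) = 1] (mod (2::int)^k)"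
  unfolding inv_mod_def by (rule theI'[OF inv_ex1])

lemma lin_solve:
  fixes m c :: int
  shows "[243*m+119 = c] (mod 2^k) \<longleftrightarrow> m mod 2^k = (inv_mod 243 (2^k) * (c - 119)) mod 2^k"
proof -
  define I where "I = inv_mod 243 (2^k)"
  define M :: int where "M = 2^k"
  have hI: "M dvd 243 * I - 1" using inv243[of k] unfolding I_def M_def
    by (simp add: cong_iff_dvd_diff)
  have e: "(243*m+119) - c = -(c - 119 - 243*m)" by simp
  have "[243*m+119 = c] (mod M) \<longleftrightarrow> M dvd (243*m+119) - c"
    by (simp add: cong_iff_dvd_diff)
  also have "\<dots> \<longleftrightarrow> M dvd c - 119 - 243*m"
    unfolding e dvd_minus_iff ..
  also have "\<dots> \<longleftrightarrow> M dvd I*(c-119) - m"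
  proof
    assume h: "M dvd c - 119 - 243*m"
    have "I*(c-119) - m = I*(c-119-243*m) + m*(243*I-1)" by (simp add: algebra_simps)
    then show "M dvd I*(c-119) - m" using h hI by (metis dvd_add dvd_mult)
  next
    assume h: "M dvd I*(c-119) - m"
    have "c - 119 - 243*m = 243*(I*(c-119) - m) - (c-119)*(243*I-1)" by (simp add: algebra_simps)
    then show "M dvd c - 119 - 243*m" using h hI by (metis dvd_diff dvd_mult)
  qed
  also have "\<dots> \<longleftrightarrow> m mod M = (I * (c - 119)) mod M"
    by (simp add: mod_eq_dvd_iff dvd_diff_commute)
  finally show ?thesis unfolding I_def M_def .
qed


lemma a_res_range: "0 \<le> a_res w \<and> a_res w < 2^(w+6)"
  unfolding a_res_def by simp

lemma char_int:
  "((syr ^^ 5) (512*m+249) mod 64 = 57 \<and> v2 (243*m+119) = w) \<longleftrightarrow> int m mod 2^(w+6) = a_res w"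
proof -
  have "[243*m+119 = 57 * 2 ^ w] (mod 2 ^ (w + 6)) \<longleftrightarrow>
        [int (243*m+119) = int (57 * 2 ^ w)] (mod int (2 ^ (w + 6)))"
    by (rule cong_int_iff[symmetric])
  also have "\<dots> \<longleftrightarrow> [243*int m+119 = 57 * 2 ^ w] (mod 2 ^ (w + 6))" by simp
  also have "\<dots> \<longleftrightarrow> int m mod 2^(w+6) = a_res w"
    unfolding a_res_def by (rule lin_solve)
  finally show ?thesis using char_nat by simp
qed

lemma part2: "\<exists>!a::int. 0 \<le> a \<and> a < 2^(w+6) \<and>
      (\<forall>m::nat. ((syr ^^ 5) (512*m+249) mod 64 = 57 \<and> v2 (243*m+119) = w)
                  \<longleftrightarrow> int m mod 2^(w+6) = a)"
proof (rule ex1I[of _ "a_res w"])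
  show "0 \<le> a_res w \<and> a_res w < 2^(w+6) \<and>
      (\<forall>m::nat. ((syr ^^ 5) (512*m+249) mod 64 = 57 \<and> v2 (243*m+119) = w)
                  \<longleftrightarrow> int m mod 2^(w+6) = a_res w)" using a_res_range char_int by blast
  fix a :: int assume h: "0 \<le> a \<and> a < 2^(w+6) \<and>
      (\<forall>m::nat. ((syr ^^ 5) (512*m+249) mod 64 = 57 \<and> v2 (243*m+119) = w)
                  \<longleftrightarrow> int m mod 2^(w+6) = a)"
  have "int (nat a) mod 2^(w+6) = a" using h by simp
  then have "int (nat a) mod 2^(w+6) = a_res w" using h char_int by blast
  then show "a = a_res w" using h by simp
qed

lemma part5: "(syr ^^ 5) (512*m+249) mod 64 = 57 \<longleftrightarrow> (\<exists>w. int m mod 2^(w+6) = a_res w)"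
  using char_int by blast

lemma part4: "w \<noteq> w' \<Longrightarrow> \<not> (int m mod 2^(w+6) = a_res w \<and> int m mod 2^(w'+6) = a_res w')"
  using char_int[of m w] char_int[of m w'] by auto

lemma part8: "\<exists>k0::int. \<forall>t::nat. qdest (nat (a_res w) + 2^(w+6) * t) = k0 + 243 * int t"
proof -
  define a where "a = nat (a_res w)"
  define X0 where "X0 = 243*a+119"
  have ia: "int a = a_res w" using a_res_range[of w] a_def by simp
  have dX0: "2^w dvd X0"
  proof -
    have "int a mod 2^(w+6) = a_res w" using ia a_res_range[of w] by simp
    then have "v2 (243*a+119) = w" using char_int by blast
    then show ?thesis using v2_dvd[of "243*a+119" w] X0_def by simp
  qed
  show ?thesis
  proof (rule exI[of _ "(int (X0 div 2^w) - 57) div 64"], rule allI)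
    fix t :: nat
    define m where "m = a + 2^(w+6)*t"
    have "int m mod 2^(w+6) = int a mod 2^(w+6)" unfolding m_def by simp
    also have "\<dots> = a_res w" using ia a_res_range[of w] by simp
    finally have "v2 (243*m+119) = w" using char_int by blast
    then have s5: "(syr ^^ 5) (512*m+249) = (243*m+119) div 2^w" using syr5 by simp
    have x: "243*m+119 = X0 + 2^w * (243*64*t)" unfolding m_def X0_def by (simp add: power_add algebra_simps)
    have "(243*m+119) div 2^w = X0 div 2^w + 243*64*t" unfolding x using dX0 by simp
    then have "qdest m = (int (X0 div 2^w) - 57 + 64 * (243 * int t)) div 64"
      unfolding qdest_def s5 by simp
    also have "\<dots> = (int (X0 div 2^w) - 57) div 64 + 243 * int t" by simp
    finally show "qdest (nat (a_res w) + 2^(w+6) * t) = (int (X0 div 2^w) - 57) div 64 + 243 * int t"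
      unfolding m_def a_def .
  qed
qed

lemma mod_aux: "0 \<le> (r::int) \<Longrightarrow> r < 64 \<Longrightarrow> (r + 64*z) mod 64 = r"
  by simp

lemma part9_aux:
  fixes kk :: int and tt :: nat and r :: int
  assumes "0 \<le> r" "r < 64"
  shows "card {t \<in> {tt..<tt+64}. (kk + 243 * int t) mod 64 = r} = 1"
proof -
  define s where "s = ((r - kk - 243 * int tt) * 59) mod 64"
  define t1 where "t1 = tt + nat s"
  have s0: "0 \<le> s" "s < 64" unfolding s_def by simp_all
  have "(kk + 243 * int t1) mod 64 = (kk + 243 * int tt + 243 * s) mod 64"
    unfolding t1_def using s0 by (simp add: algebra_simps)
  also have "\<dots> = (kk + 243 * int tt + 243 * ((r - kk - 243 * int tt) * 59)) mod 64"
    unfolding s_def by (metis mod_add_right_eq mod_mult_right_eq)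
  also have "\<dots> = (r + 64 * (224 * (r - kk - 243 * int tt))) mod 64"
    by (simp add: algebra_simps)
  also have "\<dots> = r" using assms mod_aux by blast
  finally have t1r: "(kk + 243 * int t1) mod 64 = r" .
  have t1in: "t1 \<in> {tt..<tt+64}" unfolding t1_def using s0 by auto
  have uniq: "t = t1" if tin: "t \<in> {tt..<tt+64}" and tr: "(kk + 243 * int t) mod 64 = r" for t
  proof -
    have "(kk + 243 * int t) mod 64 = (kk + 243 * int t1) mod 64" using tr t1r by simp
    then have "64 dvd (kk + 243 * int t) - (kk + 243 * int t1)" by (simp add: mod_eq_dvd_iff)
    then have "64 dvd 243 * (int t - int t1)" by (simp add: algebra_simps)
    then have "64 dvd 59 * (243 * (int t - int t1))" by (rule dvd_mult)
    moreover have "59 * (243 * (int t - int t1)) = (int t - int t1) + 64 * (224 * (int t - int t1))"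
      by (simp add: algebra_simps)
    ultimately have h64: "64 dvd (int t - int t1) + 64 * (224 * (int t - int t1))" by metis
    have "64 dvd (int t - int t1)"
      using h64 dvd_add_left_iff[of 64 "64 * (224 * (int t - int t1))" "int t - int t1"] by (metis dvd_triv_left)
    moreover have "\<bar>int t - int t1\<bar> < 64" using tin t1in by auto
    ultimately have "int t - int t1 = 0"
    proof -
      assume d: "64 dvd (int t - int t1)" and a: "\<bar>int t - int t1\<bar> < 64"
      obtain k where k: "int t - int t1 = 64 * k" using d by (elim dvdE)
      have "k = 0" using a unfolding k by (cases "k \<ge> 0") (auto simp: abs_if split: if_splits)
      then show ?thesis using k by simp
    qed
    then show "t = t1" by simp
  qed
  have "{t \<in> {tt..<tt+64}. (kk + 243 * int t) mod 64 = r} = {t1}"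
    using uniq t1in t1r by blast
  then show ?thesis by simp
qed

lemma part9: "0 \<le> r \<and> r < 64 \<Longrightarrow>
      card {t \<in> {t0..<t0+64}. qdest (nat (a_res w) + 2^(w+6) * t) mod 64 = r} = 1"
proof -
  assume r: "0 \<le> r \<and> r < 64"
  obtain k0 where k0: "\<forall>t::nat. qdest (nat (a_res w) + 2^(w+6) * t) = k0 + 243 * int t"
    using part8 by blast
  show ?thesis using part9_aux[where kk=k0 and tt=t0 and r=r] r k0 by simp
qed


lemma count_full:
  fixes M a k :: nat assumes "a < M"
  shows "card {m \<in> {..<k*M}. m mod M = a} = k"
proof -
  have "{m \<in> {..<k*M}. m mod M = a} = (\<lambda>i. a + M*i) ` {..<k}"
  proof (intro equalityI subsetI)
    fix m assume "m \<in> {m \<in> {..<k*M}. m mod M = a}"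
    hence m: "m < k*M" "m mod M = a" by auto
    have "m div M < k" using m(1) by (rule less_mult_imp_div_less)
    moreover have "m = a + M*(m div M)" using m(2) mod_mult_div_eq[of m M] by simp
    ultimately show "m \<in> (\<lambda>i. a + M*i) ` {..<k}" by blast
  next
    fix m assume "m \<in> (\<lambda>i. a + M*i) ` {..<k}"
    then obtain i where i: "i<k" "m = a + M*i" by auto
    have "a + M*i < M*(i+1)" using assms by simp
    also have "\<dots> \<le> M*k" using i by (intro mult_le_mono2) simp
    finally show "m \<in> {m \<in> {..<k*M}. m mod M = a}" using i assms by (simp add: mult.commute)
  qed
  moreover have "inj_on (\<lambda>i. a + M*i) {..<k}" using assms by (auto simp: inj_on_def)
  ultimately show ?thesis by (simp add: card_image)
qed

lemma count_bounds:
  fixes M a N :: nat assumes "a < M"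
  shows "real N / real M - 1 \<le> real (card {m\<in>{..<N}. m mod M = a})"
    and "real (card {m\<in>{..<N}. m mod M = a}) \<le> real N / real M + 1"
proof -
  define k where "k = N div M"
  have M0: "M > 0" using assms by simp
  have kl: "k*M \<le> N" unfolding k_def by (rule div_times_less_eq_dividend)
  have ku: "N < k*M + M" using mod_less_divisor[OF M0, of N] div_mult_mod_eq[of N M] unfolding k_def by linarith
  have "card {m\<in>{..<k*M}. m mod M = a} \<le> card {m\<in>{..<N}. m mod M = a}"
    by (rule card_mono) (use kl in auto)
  hence c1: "k \<le> card {m\<in>{..<N}. m mod M = a}" using count_full[OF assms, of k] by simp
  have "card {m\<in>{..<N}. m mod M = a} \<le> card {m\<in>{..<(k+1)*M}. m mod M = a}"
    by (rule card_mono) (use ku in auto)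
  hence c2: "card {m\<in>{..<N}. m mod M = a} \<le> k+1" using count_full[OF assms, of "k+1"] by simp
  have r1: "real k * real M \<le> real N" using kl by (metis of_nat_le_iff of_nat_mult)
  have r2: "real N < real k * real M + real M" using ku by (metis of_nat_add of_nat_less_iff of_nat_mult)
  have "real k \<le> real N / real M" using r1 M0 by (simp add: field_simps)
  moreover have "real N / real M < real k + 1" using r2 M0 by (simp add: field_simps)
  ultimately show "real N / real M - 1 \<le> real (card {m\<in>{..<N}. m mod M = a})"
    and "real (card {m\<in>{..<N}. m mod M = a}) \<le> real N / real M + 1"
    using c1 c2 by (simp_all add: of_nat_le_iff[symmetric])
qed

lemma Q_nat: "int m mod 2^(w+6) = a_res w \<longleftrightarrow> m mod 2^(w+6) = nat (a_res w)"
proof -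
  have "int m mod 2^(w+6) = int (m mod 2^(w+6))" by (simp add: of_nat_mod)
  then show ?thesis using a_res_range[of w] by auto
qed

definition bW :: "nat \<Rightarrow> nat" where
  "bW W = nat ((inv_mod 243 (2^(W+1)) * (0 - 119)) mod 2^(W+1))"

lemma bW_range: "bW W < 2^(W+1)"
proof -
  have "(inv_mod 243 (2^(W+1)) * (0 - 119)) mod 2^(W+1) < (2::int)^(W+1)" by simp
  then show ?thesis unfolding bW_def by (simp add: nat_less_iff)
qed

lemma tail:
  assumes "W < w" "int m mod 2^(w+6) = a_res w"
  shows "m mod 2^(W+1) = bW W"
proof -
  have "v2 (243*m+119) = w" using assms(2) char_int by blast
  then have "2^(W+1) dvd (243*m+119)" using v2_dvd[of "243*m+119" "W+1"] assms(1) by simp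
  then have "int (2^(W+1)) dvd int (243*m+119)" by (simp only: int_dvd_int_iff)
  then have "[243 * int m + 119 = 0] (mod 2^(W+1))" by (simp add: cong_0_iff)
  then have "int m mod 2^(W+1) = (inv_mod 243 (2^(W+1)) * (0 - 119)) mod 2^(W+1)"
    by (rule lin_solve[THEN iffD1])
  moreover have "int m mod 2^(W+1) = int (m mod 2^(W+1))" by (simp add: of_nat_mod)
  ultimately show ?thesis unfolding bW_def by simp
qed

lemma sum_geom: "(\<Sum>w\<le>W. 1/(2::real)^(w+6)) = 1/32 - 1/2^(W+6)"
proof (induction W)
  case 0 then show ?case by simp
next
  case (Suc W)
  have e: "(2::real)^(Suc W+6) = 2*2^(W+6)" by (simp add: power_Suc[symmetric])
  define x :: real where "x = 2^(W+6)"
  have x0: "x > 0" unfolding x_def by simp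
  have "(\<Sum>w\<le>Suc W. 1/(2::real)^(w+6)) = 1/32 - 1/x + 1/(2*x)"
    by (simp only: sum.atMost_Suc Suc.IH e x_def)
  also have "\<dots> = 1/32 - 1/(2*x)" using x0 by (simp add: field_simps)
  finally show ?case unfolding x_def e .
qed


lemma dens_bound:
  assumes N0: "N > 0"
  shows "\<bar>real (card {m \<in> {..<N}. \<exists>w. int m mod 2^(w+6) = a_res w}) / real N - 1/32\<bar>
         \<le> 1/2^W + (real W + 2)/real N"
proof -
  define Q where "Q = (\<lambda>w. {m \<in> {..<N}. m mod 2^(w+6) = nat (a_res w)})"
  define U where "U = (\<Union>w\<in>{..W}. Q w)"
  define B where "B = {m \<in> {..<N}. m mod 2^(W+1) = bW W}"
  define A where "A = {m \<in> {..<N}. \<exists>w. int m mod 2^(w+6) = a_res w}"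
  have finQ: "finite (Q w)" for w unfolding Q_def by simp
  have cU: "card U = (\<Sum>w\<le>W. card (Q w))"
    unfolding U_def
  proof (rule card_UN_disjoint)
    show "\<forall>i\<in>{..W}. \<forall>j\<in>{..W}. i \<noteq> j \<longrightarrow> Q i \<inter> Q j = {}"
      unfolding Q_def using part4 Q_nat by blast
  qed (auto simp: finQ)
  have UA: "U \<subseteq> A" unfolding U_def A_def Q_def using Q_nat by blast
  have AUB: "A \<subseteq> U \<union> B"
  proof
    fix m assume "m \<in> A"
    then obtain w where m: "m < N" "int m mod 2^(w+6) = a_res w" unfolding A_def by auto
    show "m \<in> U \<union> B"
    proof (cases "w \<le> W")
      case True
      then show ?thesis using m Q_nat unfolding U_def Q_def by blast
    next
      case False
      then show ?thesis using m tail[of W w m] unfolding B_def by simp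
    qed
  qed
  have finU: "finite U" unfolding U_def using finQ by simp
  have finB: "finite B" unfolding B_def by simp
  have c1: "card U \<le> card A" by (rule card_mono[OF _ UA]) (simp add: A_def)
  have "card A \<le> card (U \<union> B)" by (rule card_mono) (use finU finB AUB in auto)
  also have "\<dots> \<le> card U + card B" by (rule card_Un_le)
  finally have c2: "card A \<le> card U + card B" .
  have Qb: "real N / 2^(w+6) - 1 \<le> real (card (Q w)) \<and> real (card (Q w)) \<le> real N / 2^(w+6) + 1" for w
  proof -
    have a: "nat (a_res w) < 2^(w+6)" using a_res_range[of w] by (simp add: nat_less_iff)
    show ?thesis using count_bounds[OF a, of N] unfolding Q_def by simp
  qed
  have Bb: "real (card B) \<le> real N / 2^(W+1) + 1"
    using count_bounds(2)[OF bW_range, of N W] unfolding B_def by simp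
  have sN: "(\<Sum>w\<le>W. real N / 2^(w+6)) = real N * (1/32 - 1/2^(W+6))"
    by (simp add: sum_geom[symmetric] sum_distrib_left)
  have lo: "real N * (1/32 - 1/2^(W+6)) - (real W + 1) \<le> real (card U)"
  proof -
    have "(\<Sum>w\<le>W. real N / 2^(w+6) - 1) \<le> (\<Sum>w\<le>W. real (card (Q w)))"
      by (rule sum_mono) (use Qb in blast)
    then show ?thesis using cU sN by (simp add: sum_subtractf)
  qed
  have hi: "real (card U) \<le> real N * (1/32 - 1/2^(W+6)) + (real W + 1)"
  proof -
    have "(\<Sum>w\<le>W. real (card (Q w))) \<le> (\<Sum>w\<le>W. real N / 2^(w+6) + 1)"
      by (rule sum_mono) (use Qb in blast)
    then show ?thesis using cU sN by (simp add: sum.distrib)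
  qed
  define p :: real where "p = 1/2^W"
  have p0: "p > 0" unfolding p_def by simp
  have e1: "real N * (1/2^(W+6)) = real N * p / 64" unfolding p_def by (simp add: power_add)
  have e2: "real N / 2^(W+1) = real N * p / 2" unfolding p_def by (simp add: power_add)
  have e3: "real N * (1/32 - 1/2^(W+6)) = real N / 32 - real N * p / 64"
    unfolding p_def by (simp add: power_add field_simps)
  have Np: "real N * p \<ge> 0" using p0 by simp
  have c1r: "real (card U) \<le> real (card A)" using c1 by simp
  have c2r: "real (card A) \<le> real (card U) + real (card B)" using c2 by simp
  have lo2: "real (card A) \<ge> real N / 32 - real N * p / 64 - (real W + 1)"
    using lo c1r e3 by linarith
  have hi2: "real (card A) \<le> real N / 32 - real N * p / 64 + (real W + 1) + real N * p / 2 + 1"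
    using hi c2r Bb e3 e2 by linarith
  have "\<bar>real (card A) - real N / 32\<bar> \<le> real N * p + (real W + 2)"
    using lo2 hi2 Np unfolding abs_le_iff by linarith
  then have "\<bar>real (card A) - real N / 32\<bar> / real N \<le> (real N * p + (real W + 2)) / real N"
    using N0 by (simp add: divide_right_mono)
  moreover have "\<bar>real (card A) - real N / 32\<bar> / real N = \<bar>real (card A) / real N - 1/32\<bar>"
  proof -
    have "(real (card A) - real N / 32) / real N = real (card A) / real N - 1/32"
      using N0 by (simp add: field_simps)
    moreover have "\<bar>real (card A) - real N / 32\<bar> / real N = \<bar>(real (card A) - real N / 32) / real N\<bar>"
      by (simp add: abs_divide)
    ultimately show ?thesis by simp
  qed
  moreover have "(real N * p + (real W + 2)) / real N = p + (real W + 2) / real N"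
    using N0 by (simp add: add_divide_distrib)
  ultimately show ?thesis unfolding A_def p_def by simp
qed

lemma density:
  "(\<lambda>N. real (card {m \<in> {..<N}. \<exists>w. int m mod 2^(w+6) = a_res w}) / real N) \<longlonglongrightarrow> 1/32"
proof (rule LIMSEQ_I)
  fix r :: real assume r: "0 < r"
  obtain W where W: "(1/2::real)^W < r/2" using real_arch_pow_inv[of "r/2" "1/2"] r by auto
  obtain n0 :: nat where n0: "2 * (real W + 2) / r < real n0" using reals_Archimedean2 by blast
  show "\<exists>no. \<forall>n\<ge>no. norm (real (card {m \<in> {..<n}. \<exists>w. int m mod 2^(w+6) = a_res w}) / real n - 1/32) < r"
  proof (intro exI allI impI)
    fix n assume n: "Suc n0 \<le> n"
    have n0': "n > 0" using n by simp
    have "2 * (real W + 2) / r < real n" using n0 n by linarith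
    then have "2 * (real W + 2) < r * real n" using r by (simp add: field_simps)
    then have t2: "(real W + 2) / real n < r/2" using n0' by (simp add: field_simps)
    have t1: "1/2^W < r/2" using W by (simp add: power_divide)
    show "norm (real (card {m \<in> {..<n}. \<exists>w. int m mod 2^(w+6) = a_res w}) / real n - 1/32) < r"
      using dens_bound[OF n0', of W] t1 t2 unfolding real_norm_def by linarith
  qed
qed


lemma sums_part: "(\<lambda>w::nat. 1 / (2::real)^(w+6)) sums (1/32)"
proof -
  have "(\<lambda>w::nat. (1/64) * (1/2::real)^w) sums ((1/64) * (1 / (1 - 1/2)))"
    by (rule sums_mult) (rule geometric_sums, simp)
  moreover have "(\<lambda>w::nat. (1/64) * (1/2::real)^w) = (\<lambda>w::nat. 1 / (2::real)^(w+6))"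
    by (rule ext) (simp add: power_add power_divide)
  ultimately show ?thesis by simp
qed


theorem mainTheorem8:
  shows
  "(\<forall>m::nat.
      (syr ^^ 4) (512*m+249) = 648*m+317 \<and>
      3 * (syr ^^ 4) (512*m+249) + 1 = 8 * (243*m+119) \<and>
      (syr ^^ 5) (512*m+249) = (243*m+119) div 2 ^ v2 (243*m+119) \<and>
      ((syr ^^ 5) (512*m+249) mod 64 = 57 \<longleftrightarrow>
         [243*m+119 = 57 * 2 ^ v2 (243*m+119)] (mod 2 ^ (v2 (243*m+119) + 6)))) \<and>
   (\<forall>w::nat. \<exists>!a::int. 0 \<le> a \<and> a < 2^(w+6) \<and>
      (\<forall>m::nat. ((syr ^^ 5) (512*m+249) mod 64 = 57 \<and> v2 (243*m+119) = w)
                  \<longleftrightarrow> int m mod 2^(w+6) = a)) \<and>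
   (\<forall>w::nat. 0 \<le> a_res w \<and> a_res w < 2^(w+6) \<and>
      (\<forall>m::nat. ((syr ^^ 5) (512*m+249) mod 64 = 57 \<and> v2 (243*m+119) = w)
                  \<longleftrightarrow> int m mod 2^(w+6) = a_res w)) \<and>
   (\<forall>w w' m::nat. w \<noteq> w' \<longrightarrow>
      \<not> (int m mod 2^(w+6) = a_res w \<and> int m mod 2^(w'+6) = a_res w')) \<and>
   (\<forall>m::nat. (syr ^^ 5) (512*m+249) mod 64 = 57 \<longleftrightarrow>
      (\<exists>w. int m mod 2^(w+6) = a_res w)) \<and>
   ((\<lambda>w::nat. 1 / (2::real)^(w+6)) sums (1/32)) \<and>
   ((\<lambda>N. real (card {m \<in> {..<N}. \<exists>w. int m mod 2^(w+6) = a_res w}) / real N)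
      \<longlonglongrightarrow> 1/32) \<and>
   (\<forall>w::nat. \<exists>k0::int. \<forall>t::nat.
      qdest (nat (a_res w) + 2^(w+6) * t) = k0 + 243 * int t) \<and>
   (\<forall>(w::nat) (t0::nat) (r::int). 0 \<le> r \<and> r < 64 \<longrightarrow>
      card {t \<in> {t0..<t0+64}. qdest (nat (a_res w) + 2^(w+6) * t) mod 64 = r} = 1)"
    using syr4 syr5 part1_iff part2 a_res_range char_int part4 part5 sums_part density part8 part9
  by (auto simp del: One_nat_def)

end
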